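(* Let $\mathbf m\in\mathbb C^d$ with $\operatorname{supp}(\mathbf m)\subseteq[\delta]_0$, where $2\delta-1\le d$, so that $\mathbf m=(a_0e^{i\theta_0},\dots,a_{\delta-1}e^{i\theta_{\delta-1}},0,\dots,0)^T$ with $a_j,\theta_j\in\mathbb R$. Let $1\le\gamma\le2\delta-1$ and $$\mu_2=\min_{|p|\le\gamma-1,\ |q|\le\delta-1}\left|\left(F_d(\widehat{\mathbf m}\circ S_p\overline{\widehat{\mathbf m}})\right)_q\right|.$$ If $|a_0|>(\delta-1)|a_1|$ and $|a_1|\ge|a_2|\ge\cdots\ge|a_{\delta-1}|>0$, then $\mu_2>0$.
   Context: Vectors in $\mathbb C^d$ are indexed by $[d]_0=\{0,1,\dots,d-1\}$, with all indices interpreted modulo $d$. $F_d$ is the DFT matrix $(F_d)_{j,k}=e^{-2\pi i jk/d}$ and $\widehat{\mathbf m}=F_d\mathbf m$. The shift is $(S_p\mathbf x)_n=x_{n+p}$; $\circ$ is the entrywise product and $\overline{\mathbf x}$ the entrywise conjugate; $\operatorname{supp}(\mathbf x)=\{n:x_n\neq0\}$. *)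

theory Defs
  imports Complex_Main
begin

text \<open>Vectors in C^d are represented as functions nat => complex; only the
entries at indices 0..d-1 matter. Integer indices are reduced modulo d.\<close>

definition vidx :: "nat \<Rightarrow> (nat \<Rightarrow> complex) \<Rightarrow> int \<Rightarrow> complex" where
  "vidx d x n = x (nat (n mod int d))"

definition dft :: "nat \<Rightarrow> (nat \<Rightarrow> complex) \<Rightarrow> (nat \<Rightarrow> complex)" where
  "dft d x = (\<lambda>k. \<Sum>j<d. x j * exp (- 2 * pi * \<i> * of_nat j * of_nat k / of_nat d))"

definition shift :: "nat \<Rightarrow> int \<Rightarrow> (nat \<Rightarrow> complex) \<Rightarrow> (nat \<Rightarrow> complex)" where
  "shift d p x = (\<lambda>n. vidx d x (int n + p))"

definition hadamard :: "(nat \<Rightarrow> complex) \<Rightarrow> (nat \<Rightarrow> complex) \<Rightarrow> (nat \<Rightarrow> complex)" where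
  "hadamard x y = (\<lambda>n. x n * y n)"

definition vconj :: "(nat \<Rightarrow> complex) \<Rightarrow> (nat \<Rightarrow> complex)" where
  "vconj x = (\<lambda>n. cnj (x n))"

definition supp :: "nat \<Rightarrow> (nat \<Rightarrow> complex) \<Rightarrow> nat set" where
  "supp d x = {n. n < d \<and> x n \<noteq> 0}"

definition mu2 :: "nat \<Rightarrow> nat \<Rightarrow> nat \<Rightarrow> (nat \<Rightarrow> complex) \<Rightarrow> real" where
  "mu2 d \<gamma> \<delta> m = Min ((\<lambda>(p, q). cmod (vidx d (dft d (hadamard (dft d m) (shift d p (vconj (dft d m))))) q))
      ` {(p, q). \<bar>p\<bar> \<le> int \<gamma> - 1 \<and> \<bar>q\<bar> \<le> int \<delta> - 1})"

end

theory Submission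
  imports Defs "HOL-Analysis.Analysis"
begin

definition E :: "nat \<Rightarrow> int \<Rightarrow> complex" where
  "E d n = exp (- 2 * pi * \<i> * of_int n / of_nat d)"

lemma E_add: "E d (a + b) = E d a * E d b"
  unfolding E_def by (simp add: exp_add[symmetric] algebra_simps add_divide_distrib diff_divide_distrib)

lemma E_dmult: assumes "d > 0" shows "E d (int d * k) = 1"
proof -
  have "E d (int d * k) = exp ((2 * of_int (-k) * pi) * \<i>)"
    unfolding E_def using assms by (simp add: field_simps)
  also have "\<dots> = 1" by (rule exp_integer_2pi) simp
  finally show ?thesis .
qed

lemma E_mod: assumes "d > 0" shows "E d (n mod int d) = E d n"
proof -
  have "E d n = E d (n mod int d + int d * (n div int d))" by simp
  also have "\<dots> = E d (n mod int d)" by (simp only: E_add E_dmult[OF assms] mult_1_right)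
  finally show ?thesis by simp
qed

lemma E_cong: assumes "d > 0" "a mod int d = b mod int d" shows "E d a = E d b"
  by (metis E_mod assms)

lemma E_cnj: "cnj (E d n) = E d (- n)"
  unfolding E_def by (simp add: exp_cnj)

lemma norm_E: "norm (E d n) = 1"
proof -
  have "E d n = exp (\<i> * complex_of_real (- 2 * pi * of_int n / of_nat d))"
    unfolding E_def by (simp add: field_simps)
  then show ?thesis by simp
qed

lemma E_pow: "E d (int k * r) = E d r ^ k"
proof (induction k)
  case 0 then show ?case by (simp add: E_def)
next
  case (Suc k)
  have "int (Suc k) * r = r + int k * r" by (simp add: algebra_simps)
  then show ?case using Suc by (simp add: E_add)
qed

lemma E_sum: assumes "d > 0"
  shows "(\<Sum>k<d. E d (int k * r)) = (if int d dvd r then of_nat d else 0)"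
proof (cases "int d dvd r")
  case True
  then obtain c where "r = int d * c" by blast
  then have "\<And>k. E d (int k * r) = 1" using E_dmult[OF assms, of "int k * c" for k]
    by (simp add: mult.left_commute)
  then show ?thesis using True by simp
next
  case False
  have ne: "E d r \<noteq> 1"
  proof
    assume "E d r = 1"
    then obtain n :: int where "Im (- 2 * pi * \<i> * of_int r / of_nat d) = of_int (2 * n) * pi"
      unfolding E_def exp_eq_1 by blast
    then have "- 2 * pi * of_int r / of_nat d = of_int (2 * n) * pi" by simp
    then have "pi * (real_of_int r + of_int n * of_nat d) = 0" using assms by (simp add: field_simps)
    then have "real_of_int r = - of_int n * of_nat d" by simp
    then have "r = - n * int d" by (metis of_int_eq_iff of_int_minus of_int_mult of_int_of_nat_eq)
    then show False using False by simp
  qed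
  have "(\<Sum>k<d. E d (int k * r)) = (\<Sum>k<d. E d r ^ k)" by (simp add: E_pow)
  also have "\<dots> = (E d r ^ d - 1) / (E d r - 1)" using geometric_sum[OF ne] .
  also have "E d r ^ d = 1" using E_pow[of d d r, symmetric] E_dmult[OF assms, of r] by simp
  finally show ?thesis using False by simp
qed

lemma E_cong_dvd: assumes "d > 0" "int d dvd (a - b)" shows "E d a = E d b"
  using E_cong[OF assms(1)] assms(2) by (simp add: mod_eq_dvd_iff)

lemma dft_supp:
  assumes "\<delta> \<le> d" "\<forall>j<d. \<delta> \<le> j \<longrightarrow> m j = 0"
  shows "dft d m k = (\<Sum>j<\<delta>. m j * E d (int j * int k))"
proof -
  have "dft d m k = (\<Sum>j<d. m j * E d (int j * int k))"
    unfolding dft_def E_def by (simp add: mult.assoc)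
  also have "\<dots> = (\<Sum>j<\<delta>. m j * E d (int j * int k))"
    by (rule sum.mono_neutral_right) (use assms in auto)
  finally show ?thesis .
qed

lemma main_formula:
  assumes d0: "d > 0" and dl: "\<delta> \<le> d" and dd: "2 * \<delta> - 1 \<le> d" and d1: "\<delta> \<ge> 1"
    and sp: "\<forall>j<d. \<delta> \<le> j \<longrightarrow> m j = 0" and qb: "\<bar>q\<bar> \<le> int \<delta> - 1"
  shows "vidx d (dft d (hadamard (dft d m) (shift d p (vconj (dft d m))))) q
     = of_nat d * (\<Sum>j<\<delta>. \<Sum>l<\<delta>. if int l = int j + q then m j * cnj (m l) * E d (- (int l * p)) else 0)"
proof -
  define Q where "Q = nat (q mod int d)"
  have Qi: "int Q = q mod int d" unfolding Q_def using d0 by simp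
  define w where "w = hadamard (dft d m) (shift d p (vconj (dft d m)))"
  have w: "w k = (\<Sum>j<\<delta>. \<Sum>l<\<delta>. m j * cnj (m l) * (E d (int j * int k) * E d (-(int l * (int k + p)))))" for k
  proof -
    define K where "K = nat ((int k + p) mod int d)"
    have Ki: "int K = (int k + p) mod int d" unfolding K_def using d0 by simp
    have c: "cnj (dft d m K) = (\<Sum>l<\<delta>. cnj (m l) * E d (-(int l * (int k + p))))"
    proof -
      have "cnj (dft d m K) = (\<Sum>l<\<delta>. cnj (m l) * E d (-(int l * int K)))"
        by (simp add: dft_supp[OF dl sp] E_cnj)
      also have "\<dots> = (\<Sum>l<\<delta>. cnj (m l) * E d (-(int l * (int k + p))))"
      proof (rule sum.cong[OF refl])
        fix l
        have "-(int l * int K) - (-(int l * (int k + p))) = int d * (int l * ((int k + p) div int d))"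
        proof -
          have e: "(int k + p) mod int d = int k + p - int d * ((int k + p) div int d)"
            by (smt (verit) div_mult_mod_eq mult.commute)
          show ?thesis unfolding Ki e by (simp add: algebra_simps)
        qed
        then show "cnj (m l) * E d (-(int l * int K)) = cnj (m l) * E d (-(int l * (int k + p)))"
          using E_cong_dvd[OF d0] by (metis dvd_triv_left)
      qed
      finally show ?thesis .
    qed
    have "w k = dft d m k * cnj (dft d m K)"
      unfolding w_def hadamard_def shift_def vconj_def vidx_def K_def by simp
    also have "\<dots> = (\<Sum>j<\<delta>. m j * E d (int j * int k)) * (\<Sum>l<\<delta>. cnj (m l) * E d (-(int l * (int k + p))))"
      by (subst c) (simp add: dft_supp[OF dl sp])
    also have "\<dots> = (\<Sum>j<\<delta>. \<Sum>l<\<delta>. m j * cnj (m l) * (E d (int j * int k) * E d (-(int l * (int k + p)))))"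
      by (simp add: sum_product algebra_simps)
    finally show ?thesis .
  qed
  have B: "E d (int j * int k) * E d (-(int l * (int k + p))) * E d (int k * int Q)
      = E d (- (int l * p)) * E d (int k * (int j - int l + q))" for j k l
  proof -
    have "E d (int j * int k) * E d (-(int l * (int k + p))) * E d (int k * int Q)
        = E d (int j * int k + -(int l * (int k + p)) + int k * int Q)" by (simp only: E_add)
    also have "\<dots> = E d (- (int l * p) + int k * (int j - int l + q))"
    proof (rule E_cong_dvd[OF d0])
      have "int j * int k + -(int l * (int k + p)) + int k * int Q - (- (int l * p) + int k * (int j - int l + q))
          = int d * (- int k * (q div int d))"
      proof -
        have e: "q mod int d = q - int d * (q div int d)"
          by (smt (verit) div_mult_mod_eq mult.commute)
        show ?thesis unfolding Qi e by (simp add: algebra_simps)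
      qed
      then show "int d dvd (int j * int k + -(int l * (int k + p)) + int k * int Q - (- (int l * p) + int k * (int j - int l + q)))"
        by (metis dvd_triv_left)
    qed
    also have "\<dots> = E d (- (int l * p)) * E d (int k * (int j - int l + q))" by (simp only: E_add)
    finally show ?thesis .
  qed
  have dv: "int d dvd (int j - int l + q) \<longleftrightarrow> int l = int j + q" if "j < \<delta>" "l < \<delta>" for j l
  proof
    assume h: "int d dvd (int j - int l + q)"
    show "int l = int j + q"
    proof (rule ccontr)
      assume "int l \<noteq> int j + q"
      then have "int j - int l + q \<noteq> 0" by simp
      from dvd_imp_le_int[OF this h] have "int d \<le> \<bar>int j - int l + q\<bar>" by simp
      moreover have "\<bar>int j - int l + q\<bar> \<le> 2 * int \<delta> - 2" using that qb by auto
      moreover have "2 * int \<delta> - 1 \<le> int d" using dd d1 by linarith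
      ultimately show False by linarith
    qed
  qed simp
  have "vidx d (dft d w) q = (\<Sum>k<d. w k * E d (int k * int Q))"
    unfolding vidx_def dft_def E_def Q_def by (simp add: mult.assoc)
  also have "\<dots> = (\<Sum>k<d. \<Sum>j<\<delta>. \<Sum>l<\<delta>. m j * cnj (m l) * E d (- (int l * p)) * E d (int k * (int j - int l + q)))"
    by (simp add: w sum_distrib_right B[symmetric] mult.assoc)
  also have "\<dots> = (\<Sum>j<\<delta>. \<Sum>l<\<delta>. \<Sum>k<d. m j * cnj (m l) * E d (- (int l * p)) * E d (int k * (int j - int l + q)))"
    by (simp add: sum.swap[of _ "{..<d}"])
  also have "\<dots> = (\<Sum>j<\<delta>. \<Sum>l<\<delta>. m j * cnj (m l) * E d (- (int l * p)) * (if int d dvd (int j - int l + q) then of_nat d else 0))"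
    by (intro sum.cong refl) (subst sum_distrib_left[symmetric], subst E_sum[OF d0], rule refl)
  also have "\<dots> = (\<Sum>j<\<delta>. \<Sum>l<\<delta>. of_nat d * (if int l = int j + q then m j * cnj (m l) * E d (- (int l * p)) else 0))"
    by (intro sum.cong refl) (simp add: dv)
  also have "\<dots> = of_nat d * (\<Sum>j<\<delta>. \<Sum>l<\<delta>. if int l = int j + q then m j * cnj (m l) * E d (- (int l * p)) else 0)"
    by (simp add: sum_distrib_left)
  finally show ?thesis unfolding w_def .
qed

lemma inner_delta:
  "(\<Sum>l<\<delta>. if int l = int j + q then g l else (0::complex))
   = (if 0 \<le> int j + q \<and> int j + q < int \<delta> then g (nat (int j + q)) else 0)"
proof (cases "0 \<le> int j + q")
  case True
  then have "\<And>l. (int l = int j + q) = (l = nat (int j + q))" by auto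
  moreover have "(nat (int j + q) < \<delta>) = (int j + q < int \<delta>)" using True by arith
  ultimately show ?thesis using True by (simp add: sum.delta)
next
  case False
  then have "\<And>l. int l \<noteq> int j + q" by auto
  then show ?thesis using False by simp
qed

lemma key_bound:
  fixes a \<theta> :: "nat \<Rightarrow> real" and m :: "nat \<Rightarrow> complex"
  assumes d1: "\<delta> \<ge> 1"
    and mj: "\<And>j. j < \<delta> \<Longrightarrow> m j = complex_of_real (a j) * exp (\<i> * complex_of_real (\<theta> j))"
    and a0: "\<bar>a 0\<bar> > real (\<delta> - 1) * \<bar>a 1\<bar>"
    and mono1: "\<And>j. 1 \<le> j \<Longrightarrow> j + 1 < \<delta> \<Longrightarrow> \<bar>a j\<bar> \<ge> \<bar>a (j + 1)\<bar>"
    and last: "\<bar>a (\<delta> - 1)\<bar> > 0"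
    and qb: "\<bar>q\<bar> \<le> int \<delta> - 1"
  shows "norm (\<Sum>j<\<delta>. \<Sum>l<\<delta>. if int l = int j + q then m j * cnj (m l) * E d (- (int l * p)) else 0) > 0"
proof -
  have mono: "\<bar>a j\<bar> \<le> \<bar>a i\<bar>" if "1 \<le> i" "i \<le> j" "j < \<delta>" for i j
    using that
  proof (induction j)
    case 0 then show ?case by simp
  next
    case (Suc j)
    show ?case
    proof (cases "i = Suc j")
      case False
      then have "i \<le> j" using Suc by simp
      then have "\<bar>a j\<bar> \<le> \<bar>a i\<bar>" using Suc by simp
      moreover have "\<bar>a (Suc j)\<bar> \<le> \<bar>a j\<bar>" using mono1[of j] Suc \<open>i \<le> j\<close> by simp
      ultimately show ?thesis by linarith
    qed simp
  qed
  have apos: "\<bar>a j\<bar> > 0" if "j < \<delta>" for j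
  proof (cases "j = 0")
    case True
    show ?thesis
    proof (cases "\<delta> = 1")
      case True then show ?thesis using last \<open>j = 0\<close> by simp
    next
      case False
      have "real (\<delta> - 1) * \<bar>a 1\<bar> \<ge> 0" by simp
      then have "0 < \<bar>a 0\<bar>" using a0 by linarith
      then show ?thesis using \<open>j = 0\<close> by simp
    qed
  next
    case False
    then have "\<bar>a (\<delta> - 1)\<bar> \<le> \<bar>a j\<bar>" using mono[of j "\<delta> - 1"] that by simp
    then show ?thesis using last by linarith
  qed
  have nm: "norm (m j) = \<bar>a j\<bar>" if "j < \<delta>" for j
    using mj[OF that] by (simp add: norm_mult)
  define f where "f j = (if 0 \<le> int j + q \<and> int j + q < int \<delta> then m j * cnj (m (nat (int j + q))) * E d (- (int (nat (int j + q)) * p)) else 0)" for j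
  have S: "(\<Sum>j<\<delta>. \<Sum>l<\<delta>. if int l = int j + q then m j * cnj (m l) * E d (- (int l * p)) else 0) = (\<Sum>j<\<delta>. f j)"
    unfolding f_def by (simp only: inner_delta)
  define r where "r = nat \<bar>q\<bar>"
  define j0 where "j0 = nat (- q)"
  have r\<delta>: "r < \<delta>" using qb d1 unfolding r_def by linarith
  have j0\<delta>: "j0 < \<delta>" using qb d1 unfolding j0_def by linarith
  have fnorm: "norm (f j) = \<bar>a j\<bar> * \<bar>a (nat (int j + q))\<bar>" if "j < \<delta>" "0 \<le> int j + q" "int j + q < int \<delta>" for j
    using that unfolding f_def by (simp add: norm_mult nm norm_E)
  have main: "norm (f j0) = \<bar>a 0\<bar> * \<bar>a r\<bar>"
  proof (cases "q \<ge> 0")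
    case True
    then have "j0 = 0" "nat (int j0 + q) = r" unfolding j0_def r_def by auto
    then show ?thesis using fnorm[OF j0\<delta>] True qb d1 by simp
  next
    case False
    then have e: "j0 = r" "nat (int j0 + q) = 0" "int j0 + q = 0" unfolding j0_def r_def by auto
    have "norm (f j0) = \<bar>a j0\<bar> * \<bar>a (nat (int j0 + q))\<bar>"
      by (rule fnorm[OF j0\<delta>]) (use e d1 in auto)
    then show ?thesis using e by (simp add: mult.commute)
  qed
  have other: "norm (f j) \<le> \<bar>a 1\<bar> * \<bar>a r\<bar>" if "j < \<delta>" "j \<noteq> j0" for j
  proof (cases "0 \<le> int j + q \<and> int j + q < int \<delta>")
    case False
    have "f j = 0" unfolding f_def by (rule if_not_P[OF False])
    then show ?thesis by simp
  next
    case True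
    define l where "l = nat (int j + q)"
    have l\<delta>: "l < \<delta>" using True unfolding l_def by linarith
    have d2: "\<delta> \<ge> 2" using that j0\<delta> by linarith
    have a10: "\<bar>a 1\<bar> \<le> \<bar>a 0\<bar>"
    proof -
      have "1 * \<bar>a 1\<bar> \<le> real (\<delta> - 1) * \<bar>a 1\<bar>"
        by (rule mult_right_mono) (use d2 in simp_all)
      then show ?thesis using a0 by linarith
    qed
    have fn: "norm (f j) = \<bar>a j\<bar> * \<bar>a l\<bar>" using fnorm[OF that(1)] True unfolding l_def by simp
    have rel: "int l = int j + q" using True unfolding l_def by simp
    have j1: "j \<ge> 1" using True that unfolding j0_def by linarith
    have l1: "l \<ge> 1" using True that rel unfolding j0_def by linarith
    have aj1: "\<bar>a j\<bar> \<le> \<bar>a 1\<bar>" by (rule mono) (use j1 that in linarith)+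
    have al1: "\<bar>a l\<bar> \<le> \<bar>a 1\<bar>" by (rule mono) (use l1 l\<delta> in linarith)+
    have b1: "\<bar>a j\<bar> * \<bar>a l\<bar> \<le> \<bar>a 1\<bar> * \<bar>a r\<bar>"
    proof (cases "r = 0")
      case True
      then have "\<bar>a r\<bar> = \<bar>a 0\<bar>" by simp
      then have "\<bar>a l\<bar> \<le> \<bar>a r\<bar>" using al1 a10 by linarith
      then show ?thesis using aj1 by (simp add: mult_mono)
    next
      case False
      show ?thesis
      proof (cases "q \<ge> 0")
        case True
        have ri: "int r = q" using True unfolding r_def by simp
        have "\<bar>a l\<bar> \<le> \<bar>a r\<bar>" by (rule mono) (use False ri rel l\<delta> in linarith)+
        then show ?thesis using aj1 by (simp add: mult_mono)
      next
        case qn: False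
        have ri: "int r = - q" using qn unfolding r_def by simp
        have "\<bar>a j\<bar> \<le> \<bar>a r\<bar>" by (rule mono) (use False ri rel that in linarith)+
        then show ?thesis using al1 by (simp add: mult_mono mult.commute)
      qed
    qed
    then show ?thesis using fn by simp
  qed
  have fin: "finite {..<\<delta>}" by simp
  have split: "(\<Sum>j<\<delta>. f j) = f j0 + (\<Sum>j\<in>{..<\<delta>} - {j0}. f j)"
    using sum.remove[OF fin, of j0 f] j0\<delta> by simp
  have restb: "norm (\<Sum>j\<in>{..<\<delta>} - {j0}. f j) \<le> real (\<delta> - 1) * (\<bar>a 1\<bar> * \<bar>a r\<bar>)"
  proof -
    have "norm (\<Sum>j\<in>{..<\<delta>} - {j0}. f j) \<le> (\<Sum>j\<in>{..<\<delta>} - {j0}. norm (f j))" by (rule norm_sum)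
    also have "\<dots> \<le> of_nat (card ({..<\<delta>} - {j0})) * (\<bar>a 1\<bar> * \<bar>a r\<bar>)"
      by (rule sum_bounded_above) (use other in auto)
    also have "card ({..<\<delta>} - {j0}) = \<delta> - 1" using j0\<delta> by simp
    finally show ?thesis by simp
  qed
  have gap: "real (\<delta> - 1) * (\<bar>a 1\<bar> * \<bar>a r\<bar>) < \<bar>a 0\<bar> * \<bar>a r\<bar>"
    using mult_strict_right_mono[OF a0 apos[OF r\<delta>]] by (simp add: mult.assoc)
  have "norm (f j0) - norm (\<Sum>j\<in>{..<\<delta>} - {j0}. f j) \<le> norm (\<Sum>j<\<delta>. f j)"
    unfolding split by (metis norm_diff_ineq norm_minus_commute diff_minus_eq_add)
  then show ?thesis unfolding S using main restb gap by linarith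
qed

theorem mainTheorem9:
  fixes d \<delta> \<gamma> :: nat and m :: "nat \<Rightarrow> complex" and a \<theta> :: "nat \<Rightarrow> real"
  assumes "\<delta> \<ge> 1" and "2 * \<delta> - 1 \<le> d"
    and "supp d m \<subseteq> {0..<\<delta>}"
    and "\<And>j. j < \<delta> \<Longrightarrow> m j = complex_of_real (a j) * exp (\<i> * complex_of_real (\<theta> j))"
    and "1 \<le> \<gamma>" and "\<gamma> \<le> 2 * \<delta> - 1"
    and "\<bar>a 0\<bar> > real (\<delta> - 1) * \<bar>a 1\<bar>"
    and "\<And>j. 1 \<le> j \<Longrightarrow> j + 1 < \<delta> \<Longrightarrow> \<bar>a j\<bar> \<ge> \<bar>a (j + 1)\<bar>"
    and "\<bar>a (\<delta> - 1)\<bar> > 0"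
  shows "mu2 d \<gamma> \<delta> m > 0"
proof -
  have d0: "d > 0" and dl: "\<delta> \<le> d" using assms(1,2) by linarith+
  have sp: "\<forall>j<d. \<delta> \<le> j \<longrightarrow> m j = 0" using assms(3) unfolding supp_def by auto
  define A where "A = {(p, q). \<bar>p\<bar> \<le> int \<gamma> - 1 \<and> \<bar>q\<bar> \<le> int \<delta> - 1}"
  have finA: "finite A"
  proof (rule finite_subset)
    show "A \<subseteq> {-(int \<gamma>)..int \<gamma>} \<times> {-(int \<delta>)..int \<delta>}" unfolding A_def by auto
  qed simp
  have neA: "(0, 0) \<in> A" unfolding A_def using assms(1,5) by simp
  have pos: "cmod (vidx d (dft d (hadamard (dft d m) (shift d p (vconj (dft d m))))) q) > 0"
    if "(p, q) \<in> A" for p q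
  proof -
    have qb: "\<bar>q\<bar> \<le> int \<delta> - 1" using that unfolding A_def by simp
    show ?thesis
      unfolding main_formula[OF d0 dl assms(2) assms(1) sp qb] norm_mult
      using key_bound[OF assms(1) assms(4) assms(7) assms(8) assms(9) qb, of d p] d0 by simp
  qed
  have "mu2 d \<gamma> \<delta> m = Min ((\<lambda>(p, q). cmod (vidx d (dft d (hadamard (dft d m) (shift d p (vconj (dft d m))))) q)) ` A)"
    unfolding mu2_def A_def ..
  also have "0 < \<dots>"
    using finA neA pos by (subst Min_gr_iff) auto
  finally show ?thesis .
qed

end
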